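(* Let $s$ be a positive integer, let $\mathcal F$ be a hypergraph on a vertex set $V$, and let $i$ be an integer with $0<i<|V|$ such that $\wp(\mathcal F,i)\le\frac{|\mathcal F|}{2^s|V|^{s-1}}$. Then there are at least $i^s$ tuples $U\in V^s$ with $|\mathcal F(U)|\ge\frac{|\mathcal F|}{(2|V|)^s}$.
   Context: For a vertex set $I$, $\mathcal F[I]=\{e\in\mathcal F:e\subseteq I\}$ and $\wp(\mathcal F,i)=\max_{|I|=i}|\mathcal F[I]|$. The link of a vertex set $I$ is $\mathcal F(I)=\{e\setminus I: I\subseteq e\in\mathcal F\}$ (a hypergraph on $V\setminus I$). For a tuple $U$ of vertices (entries may repeat), $|U|$ denotes the number of distinct vertices in $U$ and $\mathcal F(U)$ is the link of the set of distinct vertices of $U$. *)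

theory Defs
  imports Complex_Main
begin

definition induced :: "'a set set \<Rightarrow> 'a set \<Rightarrow> 'a set set" where
  "induced F I = {e \<in> F. e \<subseteq> I}"

definition wp :: "'a set set \<Rightarrow> 'a set \<Rightarrow> nat \<Rightarrow> nat" where
  "wp F V i = Max {card (induced F I) | I. I \<subseteq> V \<and> card I = i}"

definition link :: "'a set set \<Rightarrow> 'a set \<Rightarrow> 'a set set" where
  "link F I = {e - I | e. e \<in> F \<and> I \<subseteq> e}"

end

theory Submission
  imports Defs
begin

definition cnt :: "'a set set \<Rightarrow> 'a set \<Rightarrow> nat" where
  "cnt F A = card {e\<in>F. A \<subseteq> e}"

lemma link_card: "card (link F I) = cnt F I"
proof -
  have "link F I = (\<lambda>e. e - I) ` {e\<in>F. I \<subseteq> e}" unfolding link_def by auto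
  moreover have "inj_on (\<lambda>e. e - I) {e\<in>F. I \<subseteq> e}"
    by (rule inj_onI) blast
  ultimately show ?thesis unfolding cnt_def by (simp add: card_image)
qed

lemma ext:
  fixes F :: "'a set set" and V A and i :: nat
  assumes fin: "finite V" and FV: "\<forall>e\<in>F. e \<subseteq> V" and i: "i < card V"
    and wpb: "real (wp F V i) \<le> real (cnt F A) / 2"
  shows "card {v\<in>V. real (cnt F A) \<le> 2 * real (card V) * real (cnt F (insert v A))} \<ge> i"
proof (rule ccontr)
  define H where "H = {v\<in>V. real (cnt F A) \<le> 2 * real (card V) * real (cnt F (insert v A))}"
  assume "\<not> i \<le> card {v\<in>V. real (cnt F A) \<le> 2 * real (card V) * real (cnt F (insert v A))}"
  hence Hi: "card H < i" by (simp add: H_def)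
  have HV: "H \<subseteq> V" by (auto simp: H_def)
  have finH: "finite H" using fin HV finite_subset by blast
  have "card (V - H) = card V - card H" using card_Diff_subset[OF finH HV] .
  hence "i - card H \<le> card (V - H)" using i by simp
  then obtain J where J: "J \<subseteq> V - H" "card J = i - card H"
    using obtain_subset_with_card_n by metis
  define I where "I = H \<union> J"
  have IV: "I \<subseteq> V" using J HV by (auto simp: I_def)
  have finJ: "finite J" using J fin finite_subset by blast
  have cardI: "card I = i" unfolding I_def
    using card_Un_disjoint[OF finH finJ] J Hi by auto
  have FF: "finite F"
  proof -
    have "F \<subseteq> Pow V" using FV by auto
    thus ?thesis using fin finite_subset by blast
  qed
  have cover: "{e\<in>F. A \<subseteq> e} \<subseteq> induced F I \<union> (\<Union>v\<in>V-I. {e\<in>F. insert v A \<subseteq> e})"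
    using FV by (auto simp: induced_def)
  have finI: "finite (induced F I)" using FF by (simp add: induced_def)
  have "cnt F A \<le> card (induced F I \<union> (\<Union>v\<in>V-I. {e\<in>F. insert v A \<subseteq> e}))"
    unfolding cnt_def
  proof (rule card_mono[OF _ cover])
    have "induced F I \<union> (\<Union>v\<in>V-I. {e\<in>F. insert v A \<subseteq> e}) \<subseteq> F" by (auto simp: induced_def)
    thus "finite (induced F I \<union> (\<Union>v\<in>V-I. {e\<in>F. insert v A \<subseteq> e}))" using FF finite_subset by blast
  qed
  also have "\<dots> \<le> card (induced F I) + card (\<Union>v\<in>V-I. {e\<in>F. insert v A \<subseteq> e})"
    by (rule card_Un_le)
  also have "card (\<Union>v\<in>V-I. {e\<in>F. insert v A \<subseteq> e}) \<le> (\<Sum>v\<in>V-I. cnt F (insert v A))"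
    unfolding cnt_def by (rule card_UN_le) (use fin in auto)
  finally have c1: "cnt F A \<le> card (induced F I) + (\<Sum>v\<in>V-I. cnt F (insert v A))" by simp
  have fs: "finite {card (induced F I) |I. I \<subseteq> V \<and> card I = i}"
  proof -
    have "{card (induced F I) |I. I \<subseteq> V \<and> card I = i} \<subseteq> (\<lambda>I. card (induced F I)) ` Pow V" by auto
    thus ?thesis using fin finite_subset by blast
  qed
  have wpge: "card (induced F I) \<le> wp F V i" unfolding wp_def
    by (rule Max_ge[OF fs]) (use IV cardI in blast)
  have n0: "card V > 0" using i by simp
  have ne: "V - I \<noteq> {}"
  proof
    assume "V - I = {}" hence "V \<subseteq> I" by auto
    hence "card V \<le> card I" using fin IV by (simp add: card_mono finite_subset)
    thus False using cardI i by simp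
  qed
  have lt: "(\<Sum>v\<in>V-I. real (cnt F (insert v A))) < (\<Sum>v\<in>V-I. real (cnt F A) / (2 * real (card V)))"
  proof (rule sum_strict_mono)
    show "finite (V - I)" using fin by simp
    show "V - I \<noteq> {}" by (rule ne)
    fix v assume v: "v \<in> V - I"
    hence "v \<notin> H" by (auto simp: I_def)
    hence "2 * real (card V) * real (cnt F (insert v A)) < real (cnt F A)" using v by (auto simp: H_def)
    thus "real (cnt F (insert v A)) < real (cnt F A) / (2 * real (card V))"
      using n0 by (simp add: field_simps)
  qed
  have "(\<Sum>v\<in>V-I. real (cnt F A) / (2 * real (card V))) = real (card (V - I)) * (real (cnt F A) / (2 * real (card V)))"
    by simp
  also have "\<dots> \<le> real (card V) * (real (cnt F A) / (2 * real (card V)))"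
  proof (rule mult_right_mono)
    have "card (V - I) \<le> card V" using fin by (simp add: card_mono)
    thus "real (card (V - I)) \<le> real (card V)" by simp
  qed simp
  also have "\<dots> = real (cnt F A) / 2" using n0 by simp
  finally have "(\<Sum>v\<in>V-I. real (cnt F (insert v A))) < real (cnt F A) / 2" using lt by linarith
  moreover have "real (cnt F A) \<le> real (card (induced F I)) + (\<Sum>v\<in>V-I. real (cnt F (insert v A)))"
  proof -
    have "real (cnt F A) \<le> real (card (induced F I) + (\<Sum>v\<in>V-I. cnt F (insert v A)))"
      using c1 by (simp only: of_nat_le_iff)
    thus ?thesis by simp
  qed
  moreover have "real (card (induced F I)) \<le> real (wp F V i)" using wpge by simp
  ultimately show False using wpb by linarith
qed


lemma fin_lists: "finite V \<Longrightarrow> finite {U. length U = t \<and> set U \<subseteq> V \<and> P U}"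
proof -
  assume "finite V"
  hence "finite {U. set U \<subseteq> V \<and> length U = t}" by (rule finite_lists_length_eq)
  thus ?thesis by (rule finite_subset[rotated]) auto
qed

lemma grow:
  fixes F :: "'a set set" and V :: "'a set" and s i :: nat
  assumes fin: "finite V"
    and FV: "\<forall>e\<in>F. e \<subseteq> V"
    and i: "i < card V"
    and wpb: "real (wp F V i) \<le> real (card F) / (2 ^ s * real (card V) ^ (s - 1))"
  shows "t \<le> s \<Longrightarrow> card {U. length U = t \<and> set U \<subseteq> V \<and>
            real (cnt F (set U)) \<ge> real (card F) / (2 * real (card V)) ^ t} \<ge> i ^ t"
proof (induction t)
  case 0
  have "{U. length U = 0 \<and> set U \<subseteq> V \<and>
            real (cnt F (set U)) \<ge> real (card F) / (2 * real (card V)) ^ 0} = {[]}"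
    by (auto simp: cnt_def)
  thus ?case by simp
next
  case (Suc t)
  define n where "n = card V"
  define m where "m = card F"
  have n0: "n > 0" using i n_def by simp
  define G where "G t = {U. length U = t \<and> set U \<subseteq> V \<and>
            real (cnt F (set U)) \<ge> real m / (2 * real n) ^ t}" for t
  have IH: "card (G t) \<ge> i ^ t" using Suc by (simp add: G_def m_def n_def)
  define Hs where "Hs W = {v\<in>V. real (cnt F (set W)) \<le> 2 * real n * real (cnt F (insert v (set W)))}" for W
  have bound: "real m / (2 ^ s * real n ^ (s - 1)) \<le> (real m / (2 * real n) ^ t) / 2"
  proof -
    have a: "(2::real) ^ (t+1) \<le> 2 ^ s" by (rule power_increasing) (use Suc in auto)
    have b: "real n ^ t \<le> real n ^ (s - 1)" by (rule power_increasing) (use Suc n0 in auto)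
    have "(2::real) ^ (t+1) * real n ^ t \<le> 2 ^ s * real n ^ (s - 1)"
      by (rule mult_mono[OF a b]) auto
    hence "real m / (2 ^ s * real n ^ (s - 1)) \<le> real m / (2 ^ (t+1) * real n ^ t)"
      by (intro divide_left_mono) (use n0 in auto)
    also have "\<dots> = (real m / (2 * real n) ^ t) / 2" by (simp add: power_mult_distrib)
    finally show ?thesis .
  qed
  have ex: "card (Hs W) \<ge> i" if W: "W \<in> G t" for W
  proof -
    have "real (wp F V i) \<le> real (cnt F (set W)) / 2"
      using wpb bound W by (simp add: G_def m_def n_def)
    from ext[OF fin FV i this] show ?thesis by (simp add: Hs_def n_def)
  qed
  have finG: "finite (G k)" for k unfolding G_def by (rule fin_lists[OF fin])
  have finH: "finite (Hs W)" for W using fin by (simp add: Hs_def)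
  have sub: "(\<lambda>(W,v). W @ [v]) ` Sigma (G t) Hs \<subseteq> G (Suc t)"
  proof clarsimp
    fix W v assume W: "W \<in> G t" and v: "v \<in> Hs W"
    have "real m / (2 * real n) ^ Suc t = (real m / (2 * real n) ^ t) / (2 * real n)" by simp
    also have "\<dots> \<le> real (cnt F (set W)) / (2 * real n)"
      by (rule divide_right_mono) (use W n0 in \<open>auto simp: G_def\<close>)
    also have "\<dots> \<le> real (cnt F (insert v (set W)))"
      using v n0 by (simp add: Hs_def field_simps)
    finally show "W @ [v] \<in> G (Suc t)" using W v by (auto simp: G_def Hs_def)
  qed
  have inj: "inj_on (\<lambda>(W,v). W @ [v]) (Sigma (G t) Hs)"
    by (auto simp: inj_on_def)
  have "i ^ Suc t = i ^ t * i" by simp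
  also have "\<dots> \<le> card (G t) * i" using IH by simp
  also have "\<dots> = (\<Sum>W\<in>G t. i)" by simp
  also have "\<dots> \<le> (\<Sum>W\<in>G t. card (Hs W))" by (rule sum_mono) (rule ex)
  also have "\<dots> = card (Sigma (G t) Hs)" using finG finH by (simp add: card_SigmaI)
  also have "\<dots> = card ((\<lambda>(W,v). W @ [v]) ` Sigma (G t) Hs)" using inj by (simp add: card_image)
  also have "\<dots> \<le> card (G (Suc t))" by (rule card_mono[OF finG sub])
  finally show ?case by (simp add: G_def m_def n_def)
qed

theorem lemma2p3:
  fixes F :: "'a set set" and V :: "'a set" and s i :: nat
  assumes "finite V"
    and "\<forall>e\<in>F. e \<subseteq> V"
    and "s > 0"
    and "0 < i" and "i < card V"
    and "real (wp F V i) \<le> real (card F) / (2 ^ s * real (card V) ^ (s - 1))"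
  shows "card {U :: 'a list. length U = s \<and> set U \<subseteq> V \<and>
            real (card (link F (set U))) \<ge> real (card F) / (2 * real (card V)) ^ s} \<ge> i ^ s"
  using grow[OF assms(1,2,5,6), of s] by (simp add: link_card)

end
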